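(* Let $f:G\to H$ be a group homomorphism with $H$ nontrivial. (1) If $H$ is torsion free, then $f$ is locally sectionable if and only if $f$ is surjective. (2) If $H$ is a torsion group, then $f$ is locally sectionable if and only if for each $b\in H$ there exists $a\in G$ with $f(a)=b$ and $o(a)=o(b)$.
   Context: $o(g)$ denotes the order of an element $g$. For a homomorphism $f:G\to H$ and a subgroup $L\le H$, a local section of $f$ on $L$ is a homomorphism $s:L\to G$ with $f\circ s=\mathrm{incl}_L$, where $\mathrm{incl}_L:L\hookrightarrow H$ is the inclusion. The homomorphism $f$ is called locally sectionable if for every $b\in H$ with $b\neq 1$ there is a subgroup $L\le H$ with $b\in L$ such that $f$ admits a local section on $L$. *)

theory Defs
  imports "HOL-Algebra.Algebra"
begin

definition local_section ::
  "('a, 'c) monoid_scheme \<Rightarrow> ('b, 'd) monoid_scheme \<Rightarrow> ('a \<Rightarrow> 'b) \<Rightarrow> 'b set \<Rightarrow> ('b \<Rightarrow> 'a) \<Rightarrow> bool"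
where
  "local_section G H f L s \<longleftrightarrow>
     subgroup L H \<and> s \<in> hom (H\<lparr>carrier := L\<rparr>) G \<and> (\<forall>x\<in>L. f (s x) = x)"

definition locally_sectionable ::
  "('a, 'c) monoid_scheme \<Rightarrow> ('b, 'd) monoid_scheme \<Rightarrow> ('a \<Rightarrow> 'b) \<Rightarrow> bool"
where
  "locally_sectionable G H f \<longleftrightarrow>
     (\<forall>b\<in>carrier H. b \<noteq> \<one>\<^bsub>H\<^esub> \<longrightarrow>
        (\<exists>L. subgroup L H \<and> b \<in> L \<and> (\<exists>s. local_section G H f L s)))"

definition torsion_free :: "('b, 'd) monoid_scheme \<Rightarrow> bool" where
  "torsion_free H \<longleftrightarrow>
     (\<forall>b\<in>carrier H. \<forall>n::nat. n > 0 \<longrightarrow> b [^]\<^bsub>H\<^esub> n = \<one>\<^bsub>H\<^esub> \<longrightarrow> b = \<one>\<^bsub>H\<^esub>)"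

definition torsion_group :: "('b, 'd) monoid_scheme \<Rightarrow> bool" where
  "torsion_group H \<longleftrightarrow>
     (\<forall>b\<in>carrier H. \<exists>n::nat. n > 0 \<and> b [^]\<^bsub>H\<^esub> n = \<one>\<^bsub>H\<^esub>)"

end

theory Submission imports Defs begin

lemma construct_section:
  assumes G: "group G" and H: "group H" and hf: "f \<in> hom G H"
    and a: "a \<in> carrier G" and b: "b \<in> carrier H" and fab: "f a = b"
    and ord: "group.ord G a = group.ord H b"
  shows "local_section G H f (generate H {b}) (\<lambda>x. a [^]\<^bsub>G\<^esub> (SOME k::int. x = b [^]\<^bsub>H\<^esub> k))"
proof -
  interpret G: group G by fact
  interpret H: group H by fact
  interpret fh: group_hom G H f using G H hf by (simp add: group_hom_def group_hom_axioms_def)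
  define s where "s = (\<lambda>x. a [^]\<^bsub>G\<^esub> (SOME k::int. x = b [^]\<^bsub>H\<^esub> k))"
  have L: "generate H {b} = {b [^]\<^bsub>H\<^esub> (k::int) | k. k \<in> UNIV}" using H.generate_pow[OF b] .
  have sk: "s (b [^]\<^bsub>H\<^esub> k) = a [^]\<^bsub>G\<^esub> k" for k :: int
  proof -
    define k' where "k' = (SOME j::int. b [^]\<^bsub>H\<^esub> k = b [^]\<^bsub>H\<^esub> j)"
    have "b [^]\<^bsub>H\<^esub> k = b [^]\<^bsub>H\<^esub> k'" unfolding k'_def by (rule someI[of _ k]) simp
    then have "int (H.ord b) dvd (k' - k)" using H.int_pow_eq[OF b] by simp
    then have "a [^]\<^bsub>G\<^esub> k = a [^]\<^bsub>G\<^esub> k'" using G.int_pow_eq[OF a] ord by simp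
    then show ?thesis unfolding s_def k'_def by simp
  qed
  have sub: "subgroup (generate H {b}) H" using H.generate_is_subgroup b by simp
  have "s \<in> hom (H\<lparr>carrier := generate H {b}\<rparr>) G"
  proof (rule homI)
    fix x assume "x \<in> carrier (H\<lparr>carrier := generate H {b}\<rparr>)"
    then obtain k where "x = b [^]\<^bsub>H\<^esub> (k::int)" using L by auto
    then show "s x \<in> carrier G" using sk a by simp
  next
    fix x y assume "x \<in> carrier (H\<lparr>carrier := generate H {b}\<rparr>)" "y \<in> carrier (H\<lparr>carrier := generate H {b}\<rparr>)"
    then obtain k j where "x = b [^]\<^bsub>H\<^esub> (k::int)" "y = b [^]\<^bsub>H\<^esub> (j::int)" using L by auto
    then show "s (x \<otimes>\<^bsub>H\<lparr>carrier := generate H {b}\<rparr>\<^esub> y) = s x \<otimes>\<^bsub>G\<^esub> s y"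
      using sk a b by (simp add: H.int_pow_mult[symmetric] G.int_pow_mult[symmetric])
  qed
  moreover have "\<forall>x\<in>generate H {b}. f (s x) = x"
  proof
    fix x assume "x \<in> generate H {b}"
    then obtain k where "x = b [^]\<^bsub>H\<^esub> (k::int)" using L by auto
    then show "f (s x) = x" using sk a fab fh.hom_int_pow by simp
  qed
  ultimately show ?thesis using sub unfolding local_section_def s_def by simp
qed

lemma section_pow:
  assumes G: "group G" and H: "group H" and ls: "local_section G H f L s" and b: "b \<in> L"
  shows "s (b [^]\<^bsub>H\<^esub> (n::nat)) = s b [^]\<^bsub>G\<^esub> n \<and> b [^]\<^bsub>H\<^esub> n \<in> L"
proof -
  interpret G: group G by fact
  interpret H: group H by fact
  have sub: "subgroup L H" and hs: "s \<in> hom (H\<lparr>carrier := L\<rparr>) G" using ls unfolding local_section_def by auto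
  interpret L: group "H\<lparr>carrier := L\<rparr>" using H.subgroup_imp_group[OF sub] .
  interpret sh: group_hom "H\<lparr>carrier := L\<rparr>" G s using hs by (simp add: group_hom_def group_hom_axioms_def G.group_axioms L.group_axioms)
  have one: "s \<one>\<^bsub>H\<^esub> = \<one>\<^bsub>G\<^esub>" using sh.hom_one by simp
  show ?thesis
  proof (induction n)
    case 0 then show ?case using one subgroup.one_closed[OF sub] by simp
  next
    case (Suc n)
    have "s (b [^]\<^bsub>H\<^esub> n \<otimes>\<^bsub>H\<^esub> b) = s (b [^]\<^bsub>H\<^esub> n) \<otimes>\<^bsub>G\<^esub> s b"
      using sh.hom_mult[of "b [^]\<^bsub>H\<^esub> n" b] Suc b by simp
    then show ?case using Suc b subgroup.m_closed[OF sub] by simp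
  qed
qed

lemma section_ord:
  assumes G: "group G" and H: "group H" and hf: "f \<in> hom G H" and ls: "local_section G H f L s" and b: "b \<in> L"
    and pos: "group.ord H b > 0"
  shows "s b \<in> carrier G \<and> f (s b) = b \<and> group.ord G (s b) = group.ord H b"
proof -
  interpret G: group G by fact
  interpret H: group H by fact
  interpret fh: group_hom G H f using G H hf by (simp add: group_hom_def group_hom_axioms_def)
  have sub: "subgroup L H" and hs: "s \<in> hom (H\<lparr>carrier := L\<rparr>) G" and fs: "\<forall>x\<in>L. f (s x) = x"
    using ls unfolding local_section_def by auto
  have sbc: "s b \<in> carrier G" using hs b unfolding hom_def by auto
  have bc: "b \<in> carrier H" using sub b subgroup.subset by blast
  have fsb: "f (s b) = b" using fs b by simp
  have 1: "s b [^]\<^bsub>G\<^esub> (H.ord b) = \<one>\<^bsub>G\<^esub>"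
    using section_pow[OF G H ls b, of "H.ord b"] H.pow_ord_eq_1[OF bc] section_pow[OF G H ls b, of 0] by simp
  then have d1: "G.ord (s b) dvd H.ord b" using G.pow_eq_id[OF sbc] by simp
  have "b [^]\<^bsub>H\<^esub> (G.ord (s b)) = \<one>\<^bsub>H\<^esub>"
    using fh.hom_nat_pow[OF sbc, of "G.ord (s b)"] fsb G.pow_ord_eq_1[OF sbc] by simp
  then have d2: "H.ord b dvd G.ord (s b)" using H.pow_eq_id[OF bc] by simp
  show ?thesis using d1 d2 sbc fsb by (simp add: dvd_antisym)
qed

theorem lemma2p4:
  fixes G :: "('a, 'c) monoid_scheme" and H :: "('b, 'd) monoid_scheme" and f :: "'a \<Rightarrow> 'b"
  assumes "group G" and "group H" and "f \<in> hom G H"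
    and "carrier H \<noteq> {\<one>\<^bsub>H\<^esub>}"
  shows "(torsion_free H \<longrightarrow>
           (locally_sectionable G H f \<longleftrightarrow> f ` carrier G = carrier H))
       \<and> (torsion_group H \<longrightarrow>
           (locally_sectionable G H f \<longleftrightarrow>
              (\<forall>b\<in>carrier H. \<exists>a\<in>carrier G. f a = b \<and> group.ord G a = group.ord H b)))"
proof -
  note G = assms(1) and H = assms(2) and hf = assms(3)
  interpret G: group G by fact
  interpret H: group H by fact
  interpret fh: group_hom G H f using G H hf by (simp add: group_hom_def group_hom_axioms_def)
  have gen: "locally_sectionable G H f" if ex: "\<forall>b\<in>carrier H. b \<noteq> \<one>\<^bsub>H\<^esub> \<longrightarrow> (\<exists>a\<in>carrier G. f a = b \<and> G.ord a = H.ord b)"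
  proof -
    have "\<exists>L. subgroup L H \<and> b \<in> L \<and> (\<exists>s. local_section G H f L s)"
      if "b \<in> carrier H" "b \<noteq> \<one>\<^bsub>H\<^esub>" for b
    proof -
      have "\<exists>a\<in>carrier G. f a = b \<and> G.ord a = H.ord b" using ex that by simp
      then obtain a where a: "a \<in> carrier G" "f a = b" "G.ord a = H.ord b" by (elim bexE conjE)
      have "local_section G H f (generate H {b}) (\<lambda>x. a [^]\<^bsub>G\<^esub> (SOME k::int. x = b [^]\<^bsub>H\<^esub> k))"
        by (rule construct_section[OF G H hf a(1) that(1) a(2) a(3)])
      moreover have "subgroup (generate H {b}) H" using H.generate_is_subgroup that(1) by simp
      moreover have "b \<in> generate H {b}" by (rule generate.incl) simp
      ultimately show ?thesis by (intro exI conjI)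
    qed
    then show ?thesis unfolding locally_sectionable_def by (intro ballI impI)
  qed
  have secs: "\<exists>L s. local_section G H f L s \<and> b \<in> L"
    if "locally_sectionable G H f" "b \<in> carrier H" "b \<noteq> \<one>\<^bsub>H\<^esub>" for b
  proof -
    have "\<exists>L. subgroup L H \<and> b \<in> L \<and> (\<exists>s. local_section G H f L s)"
      using that unfolding locally_sectionable_def by simp
    then obtain L s where "b \<in> L" "local_section G H f L s" by (elim exE conjE)
    then show ?thesis by (intro exI conjI)
  qed
  have part1: "locally_sectionable G H f \<longleftrightarrow> f ` carrier G = carrier H" if tf: "torsion_free H"
  proof
    assume ls: "locally_sectionable G H f"
    show "f ` carrier G = carrier H"
    proof
      show "f ` carrier G \<subseteq> carrier H" using fh.hom_closed by (rule image_subsetI)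
      show "carrier H \<subseteq> f ` carrier G"
      proof
        fix b assume b: "b \<in> carrier H"
        show "b \<in> f ` carrier G"
        proof (cases "b = \<one>\<^bsub>H\<^esub>")
          case True then show ?thesis using fh.hom_one G.one_closed by (metis image_eqI)
        next
          case False
          then obtain L s where ls': "local_section G H f L s" "b \<in> L" using secs ls b by blast
          then have "s b \<in> carrier G" "f (s b) = b" unfolding local_section_def hom_def by auto
          then show ?thesis by (metis image_eqI)
        qed
      qed
    qed
  next
    assume surj: "f ` carrier G = carrier H"
    show "locally_sectionable G H f"
    proof (rule gen, intro ballI impI)
      fix b assume b: "b \<in> carrier H" "b \<noteq> \<one>\<^bsub>H\<^esub>"
      then obtain a where a: "a \<in> carrier G" "f a = b" using surj by (metis imageE)
      have "\<forall>n::nat. n \<noteq> 0 \<longrightarrow> b [^]\<^bsub>H\<^esub> n \<noteq> \<one>\<^bsub>H\<^esub>" using tf b unfolding torsion_free_def by blast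
      then have ob: "H.ord b = 0" using H.ord_eq_0[OF b(1)] by simp
      have "G.ord a = 0"
        unfolding G.ord_eq_0[OF a(1)]
      proof (intro allI impI notI)
        fix n :: nat assume "n \<noteq> 0" "a [^]\<^bsub>G\<^esub> n = \<one>\<^bsub>G\<^esub>"
        then have "b [^]\<^bsub>H\<^esub> n = \<one>\<^bsub>H\<^esub>" using fh.hom_nat_pow[OF a(1), of n] a by simp
        then show False using \<open>\<forall>n::nat. n \<noteq> 0 \<longrightarrow> b [^]\<^bsub>H\<^esub> n \<noteq> \<one>\<^bsub>H\<^esub>\<close> \<open>n \<noteq> 0\<close> by blast
      qed
      then show "\<exists>a\<in>carrier G. f a = b \<and> G.ord a = H.ord b" using a ob by (intro bexI[of _ a] conjI) simp_all
    qed
  qed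
  have part2: "locally_sectionable G H f \<longleftrightarrow>
              (\<forall>b\<in>carrier H. \<exists>a\<in>carrier G. f a = b \<and> G.ord a = H.ord b)" if tg: "torsion_group H"
  proof
    assume ls: "locally_sectionable G H f"
    show "\<forall>b\<in>carrier H. \<exists>a\<in>carrier G. f a = b \<and> G.ord a = H.ord b"
    proof
      fix b assume b: "b \<in> carrier H"
      show "\<exists>a\<in>carrier G. f a = b \<and> G.ord a = H.ord b"
      proof (cases "b = \<one>\<^bsub>H\<^esub>")
        case True then show ?thesis using fh.hom_one G.one_closed G.ord_id H.ord_id by (intro bexI[of _ "\<one>\<^bsub>G\<^esub>"] conjI) simp_all
      next
        case False
        then obtain L s where ls': "local_section G H f L s" "b \<in> L" using secs ls b by blast
        obtain n :: nat where "n > 0" "b [^]\<^bsub>H\<^esub> n = \<one>\<^bsub>H\<^esub>" using tg b unfolding torsion_group_def by blast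
        then have "H.ord b > 0" using H.ord_eq_0[OF b] by (metis gr0I less_numeral_extra(3))
        then have "s b \<in> carrier G \<and> f (s b) = b \<and> G.ord (s b) = H.ord b" using section_ord[OF G H hf ls'] by simp
        then show ?thesis by (intro bexI[of _ "s b"] conjI) simp_all
      qed
    qed
  next
    assume "\<forall>b\<in>carrier H. \<exists>a\<in>carrier G. f a = b \<and> G.ord a = H.ord b"
    then show "locally_sectionable G H f" using gen by blast
  qed
  show ?thesis using part1 part2 by simp
qed

end
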